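(* Let $u\in\mathbb{R}^m$ and let $\mathcal{P}\subset\mathbb{R}^n$ be a nonempty compact convex set. If $-J_{f,0}^{-1}Mg(x,u)\in\mathcal{P}$ for all $x\in\mathcal{P}$, then $u$ is solvable, and there is at least one $x\in\mathcal{P}$ with $f(x,u)=0$.
   Context: Let $f:\mathbb{R}^n\times\mathbb{R}^m\to\mathbb{R}^n$ be continuous and differentiable, and suppose there are a continuously differentiable map $\psi:\mathbb{R}^n\times\mathbb{R}^m\to\mathbb{R}^q$ and a constant matrix $M\in\mathbb{R}^{n\times q}$ with $f(x,u)=M\psi(x,u)$. There is a base point $(x_0,u_0)$ with $f(x_0,u_0)=0$ at which $J_{f,0}=\frac{\partial f}{\partial x}\big|_{(x_0,u_0)}\in\mathbb{R}^{n\times n}$ is nonsingular. Let $J_{\psi,0}=\frac{\partial \psi}{\partial x}\big|_{(x_0,u_0)}\in\mathbb{R}^{q\times n}$ and define $g(x,u)=\psi(x,u)-J_{\psi,0}x$ (so $f(x,u)=J_{f,0}x+Mg(x,u)$). A control $u\in\mathbb{R}^m$ is called solvable if there exists $x\in\mathbb{R}^n$ with $f(x,u)=0$. *)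

theory Defs
  imports "HOL-Analysis.Analysis"
begin

definition solvable :: "(real^'n \<Rightarrow> real^'m \<Rightarrow> real^'n) \<Rightarrow> real^'m \<Rightarrow> bool" where
  "solvable f u \<longleftrightarrow> (\<exists>x. f x u = 0)"

definition gfun :: "(real^'n \<Rightarrow> real^'m \<Rightarrow> real^'q) \<Rightarrow> real^'n^'q \<Rightarrow> real^'n \<Rightarrow> real^'m \<Rightarrow> real^'q" where
  "gfun \<psi> J\<psi> x u = \<psi> x u - J\<psi> *v x"

end

theory Submission
  imports Defs
begin

lemma mneg: "(A::real^'a^'b) *v (- y) = - (A *v y)"
  using matrix_vector_mult_diff_distrib[of A 0 y] by simp

theorem lemma2:
  fixes f :: "real^'n \<Rightarrow> real^'m \<Rightarrow> real^'n"
    and \<psi> :: "real^'n \<Rightarrow> real^'m \<Rightarrow> real^'q"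
    and M :: "real^'q^'n"
    and x0 :: "real^'n" and u0 :: "real^'m"
    and Jf :: "real^'n^'n" and J\<psi> :: "real^'n^'q"
    and u :: "real^'m" and P :: "(real^'n) set"
  assumes f_cont: "continuous_on UNIV (\<lambda>(x, v). f x v)"
    and f_diff: "(\<lambda>(x, v). f x v) differentiable_on UNIV"
    and \<psi>_C1: "\<exists>D :: ((real^'n) \<times> (real^'m)) \<Rightarrow> ((real^'n) \<times> (real^'m)) \<Rightarrow>\<^sub>L (real^'q).
                 (\<forall>z. ((\<lambda>(x, v). \<psi> x v) has_derivative blinfun_apply (D z)) (at z))
                 \<and> continuous_on UNIV D"
    and f_M: "\<And>x v. f x v = M *v \<psi> x v"
    and base: "f x0 u0 = 0"
    and Jf_def: "((\<lambda>x. f x u0) has_derivative (\<lambda>h. Jf *v h)) (at x0)"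
    and Jf_inv: "invertible Jf"
    and J\<psi>_def: "((\<lambda>x. \<psi> x u0) has_derivative (\<lambda>h. J\<psi> *v h)) (at x0)"
    and P_ne: "P \<noteq> {}" and P_compact: "compact P" and P_convex: "convex P"
    and inv: "\<forall>x\<in>P. - (matrix_inv Jf *v (M *v gfun \<psi> J\<psi> x u)) \<in> P"
  shows "solvable f u \<and> (\<exists>x\<in>P. f x u = 0)"
proof -
  have minv: "Jf ** matrix_inv Jf = mat 1"
    using Jf_inv unfolding invertible_def matrix_inv_def by (rule someI_ex[THEN conjunct1])
  have d1: "((\<lambda>x. f x u0) has_derivative (\<lambda>h. M *v (J\<psi> *v h))) (at x0)"
    unfolding f_M by (rule bounded_linear.has_derivative[OF matrix_vector_mul_bounded_linear[of M] J\<psi>_def])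
  have JfM: "\<And>h. Jf *v h = M *v (J\<psi> *v h)"
    using has_derivative_unique[OF Jf_def d1] by metis
  obtain D :: "((real^'n) \<times> (real^'m)) \<Rightarrow> ((real^'n) \<times> (real^'m)) \<Rightarrow>\<^sub>L (real^'q)"
    where D: "\<And>z. ((\<lambda>(x, v). \<psi> x v) has_derivative blinfun_apply (D z)) (at z)"
    using \<psi>_C1 by blast
  have pc: "continuous_on UNIV (\<lambda>(x, v). \<psi> x v)"
    using D has_derivative_continuous continuous_at_imp_continuous_on by blast
  have pcx: "continuous_on UNIV (\<lambda>x. \<psi> x u)"
  proof -
    have "continuous_on UNIV ((\<lambda>(x, v). \<psi> x v) \<circ> (\<lambda>x. (x, u)))"
      by (rule continuous_on_compose) (auto intro!: continuous_intros continuous_on_subset[OF pc])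
    thus ?thesis by (simp add: o_def)
  qed
  define T where "T = (\<lambda>x. - (matrix_inv Jf *v (M *v gfun \<psi> J\<psi> x u)))"
  have Tc: "continuous_on P T"
  proof -
    have c1: "continuous_on P (\<lambda>x. \<psi> x u - J\<psi> *v x)"
      by (intro continuous_on_diff continuous_on_subset[OF pcx]
          linear_continuous_on matrix_vector_mul_bounded_linear) auto
    have c2: "continuous_on P (\<lambda>x. M *v (\<psi> x u - J\<psi> *v x))"
      using continuous_on_compose[OF c1 linear_continuous_on[OF matrix_vector_mul_bounded_linear[of M]]]
      by (simp add: o_def)
    have c3: "continuous_on P (\<lambda>x. matrix_inv Jf *v (M *v (\<psi> x u - J\<psi> *v x)))"
      using continuous_on_compose[OF c2 linear_continuous_on[OF matrix_vector_mul_bounded_linear[of "matrix_inv Jf"]]]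
      by (simp add: o_def)
    show ?thesis using continuous_on_minus[OF c3] by (simp add: T_def gfun_def)
  qed
  obtain x where x: "x \<in> P" "T x = x"
    using brouwer[OF P_compact P_convex P_ne Tc] inv unfolding T_def by blast
  have "Jf *v x = Jf *v T x" using x by simp
  also have "\<dots> = - (M *v gfun \<psi> J\<psi> x u)"
    unfolding T_def by (simp add: matrix_vector_mul_assoc matrix_mul_assoc minv mneg)
  finally have "Jf *v x = - (M *v \<psi> x u) + M *v (J\<psi> *v x)"
    by (simp add: gfun_def matrix_vector_mult_diff_distrib mneg)
  hence "f x u = 0" using JfM[of x] f_M[of x u] by simp
  thus ?thesis using x unfolding solvable_def by blast
qed

end
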